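(* Let $n\geq 1$. Each of the following four statements is equivalent to the inequality $d_n^2 < 2p_{n+1}$ (equivalently, $d_n < \sqrt{2}\,(p_{n+1})^{1/2}$): 1. $p_n > d_n\left(\frac{d_n}{2} - 1\right)$; 2. $\displaystyle \sum_{i=1}^{d_n} i \;-\; \sum_{i=1}^{n} d_i \;<\; \frac{d_n}{2} + 2$; 3. $\displaystyle (p_{n+1})^{1/2} < \left(p_n + \tfrac12\right)^{1/2} + \tfrac{\sqrt2}{2}$; 4. $\displaystyle \left(1 + \frac{1}{2p_n}\right)p_{n+1} < \left(\sqrt{p_n} + \frac{\sqrt2}{2}\sqrt{\frac{p_{n+1}}{p_n}}\right)^2$.
   Context: $p_n$ denotes the $n$th prime ($p_1=2$), and $d_n := p_{n+1}-p_n$ is the $n$th prime gap (so $d_1=1$, $d_2=2$). *)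

theory Defs
  imports "HOL-Analysis.Analysis" "HOL-Library.Infinite_Set"
begin

text \<open>The n-th prime, 1-indexed: pr 1 = 2, pr 2 = 3, ...\<close>
definition pr :: "nat \<Rightarrow> nat" where
  "pr n = enumerate {p::nat. prime p} (n - 1)"

definition gap :: "nat \<Rightarrow> nat" where
  "gap n = pr (Suc n) - pr n"

end

theory Submission
  imports Defs
begin

lemma inf_primes: "infinite {p::nat. prime p}"
  using primes_infinite by simp

lemma pr_prime: "prime (pr n)"
  unfolding pr_def using enumerate_in_set[OF inf_primes] by simp

lemma pr_mono: "pr k \<le> pr (Suc k)"
proof (cases k)
  case 0 then show ?thesis by (simp add: pr_def)
next
  case (Suc m)
  then show ?thesis unfolding pr_def
    using enumerate_mono[OF _ inf_primes, of m "Suc m"] by simp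
qed

lemma pr_strict: "n \<ge> 1 \<Longrightarrow> pr n < pr (Suc n)"
  unfolding pr_def
  using enumerate_mono[OF _ inf_primes, of "n - 1" n] by simp

lemma pr_1: "pr 1 = 2"
proof -
  have "pr 1 = (LEAST p::nat. prime p)" unfolding pr_def by (simp add: enumerate_0)
  also have "\<dots> = 2"
  proof (rule Least_equality)
    show "prime (2::nat)" by simp
    fix y :: nat assume "prime y" then show "2 \<le> y" using prime_ge_2_nat by blast
  qed
  finally show ?thesis .
qed

lemma gap_sum: "(\<Sum>i = 1..n. real (gap i)) = real (pr (Suc n)) - real (pr 1)"
proof (induction n)
  case 0 then show ?case by simp
next
  case (Suc n)
  have "(\<Sum>i = 1..Suc n. real (gap i)) = (\<Sum>i = 1..n. real (gap i)) + real (gap (Suc n))"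
    by simp
  also have "real (gap (Suc n)) = real (pr (Suc (Suc n))) - real (pr (Suc n))"
    unfolding gap_def using pr_mono[of "Suc n"] by (simp add: of_nat_diff)
  finally show ?case using Suc by simp
qed

lemma sq_less_iff: "0 \<le> (a::real) \<Longrightarrow> 0 \<le> b \<Longrightarrow> (a^2 < b^2) = (a < b)"
  using power2_less_imp_less[of a b] power_strict_mono[of a b 2] by auto

lemma gauss_sum: "(\<Sum>i = 1..d. real i) = real d * (real d + 1) / 2"
  by (induction d) (auto simp: field_simps)

theorem theorem1p5:
  fixes n :: nat
  assumes "n \<ge> 1"
  shows "(real (pr n) > real (gap n) * (real (gap n) / 2 - 1)
            \<longleftrightarrow> real (gap n) ^ 2 < 2 * real (pr (Suc n)))
       \<and> ((\<Sum>i = 1..gap n. real i) - (\<Sum>i = 1..n. real (gap i)) < real (gap n) / 2 + 2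
            \<longleftrightarrow> real (gap n) ^ 2 < 2 * real (pr (Suc n)))
       \<and> (sqrt (real (pr (Suc n))) < sqrt (real (pr n) + 1 / 2) + sqrt 2 / 2
            \<longleftrightarrow> real (gap n) ^ 2 < 2 * real (pr (Suc n)))
       \<and> ((1 + 1 / (2 * real (pr n))) * real (pr (Suc n))
              < (sqrt (real (pr n)) + sqrt 2 / 2 * sqrt (real (pr (Suc n)) / real (pr n))) ^ 2
            \<longleftrightarrow> real (gap n) ^ 2 < 2 * real (pr (Suc n)))"
proof -
  define p where "p = real (pr n)"
  define q where "q = real (pr (Suc n))"
  define d where "d = real (gap n)"
  have lt: "pr n < pr (Suc n)" using pr_strict assms by blast
  have dq: "d = q - p" unfolding d_def p_def q_def gap_def using lt by (simp add: of_nat_diff)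
  have p2: "p \<ge> 2" unfolding p_def using prime_ge_2_nat[OF pr_prime[of n]] by simp
  have d1: "d \<ge> 1" using lt dq unfolding p_def q_def by simp
  have qpos: "q > 0" using p2 d1 dq by simp
  have A: "(p > d * (d / 2 - 1)) \<longleftrightarrow> d ^ 2 < 2 * q"
    using dq by (simp add: power2_eq_square algebra_simps)
  have B: "((\<Sum>i = 1..gap n. real i) - (\<Sum>i = 1..n. real (gap i)) < d / 2 + 2) \<longleftrightarrow> d ^ 2 < 2 * q"
    unfolding gauss_sum gap_sum pr_1 d_def[symmetric] q_def[symmetric]
    by (simp add: power2_eq_square field_simps)
  have C: "(sqrt q < sqrt (p + 1/2) + sqrt 2 / 2) \<longleftrightarrow> d ^ 2 < 2 * q"
  proof -
    have s: "sqrt (p + 1/2) * sqrt 2 = sqrt (2*p+1)"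
      by (simp add: real_sqrt_mult[symmetric] algebra_simps)
    have "(sqrt q < sqrt (p + 1/2) + sqrt 2 / 2) \<longleftrightarrow> (sqrt q)^2 < (sqrt (p + 1/2) + sqrt 2 / 2)^2"
      by (rule sq_less_iff [symmetric]) (use p2 qpos in auto)
    also have "(sqrt (p + 1/2) + sqrt 2 / 2)^2 = p + 1 + sqrt (2*p+1)"
      using p2 s by (simp add: power2_eq_square algebra_simps)
    also have "(sqrt q)^2 = q" using qpos by simp
    also have "(q < p + 1 + sqrt (2*p+1)) \<longleftrightarrow> d - 1 < sqrt (2*p+1)" using dq by auto
    also have "\<dots> \<longleftrightarrow> (d-1)^2 < (sqrt (2*p+1))^2"
      by (rule sq_less_iff [symmetric]) (use d1 p2 qpos in auto)
    also have "(sqrt (2*p+1))^2 = 2*p+1" using p2 by simp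
    also have "((d-1)^2 < 2*p+1) \<longleftrightarrow> d ^ 2 < 2 * q"
      using dq by (simp add: power2_eq_square algebra_simps) (smt (verit))
    finally show ?thesis .
  qed
  have D: "((1 + 1 / (2 * p)) * q < (sqrt p + sqrt 2 / 2 * sqrt (q / p)) ^ 2) \<longleftrightarrow> d ^ 2 < 2 * q"
  proof -
    have e1: "sqrt p * sqrt (q/p) = sqrt q"
      using p2 by (simp add: real_sqrt_mult[symmetric])
    have e2: "sqrt 2 * sqrt q = sqrt (2*q)" by (simp add: real_sqrt_mult)
    have "(sqrt p + sqrt 2 / 2 * sqrt (q / p)) ^ 2
          = (sqrt p)^2 + sqrt 2 * (sqrt p * sqrt (q/p)) + (sqrt 2)^2/4 * (sqrt (q/p))^2"
      by (simp add: power2_eq_square algebra_simps)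
    also have "\<dots> = p + sqrt (2*q) + q / (2*p)"
      using p2 qpos e1 e2 by simp
    finally have R: "(sqrt p + sqrt 2 / 2 * sqrt (q / p)) ^ 2 = p + sqrt (2*q) + q / (2*p)" .
    have L: "(1 + 1 / (2 * p)) * q = q + q / (2*p)" by (simp add: algebra_simps)
    have "((1 + 1 / (2 * p)) * q < (sqrt p + sqrt 2 / 2 * sqrt (q / p)) ^ 2) \<longleftrightarrow> d < sqrt (2*q)"
      unfolding R L using dq by auto
    also have "\<dots> \<longleftrightarrow> d^2 < (sqrt (2*q))^2"
      by (rule sq_less_iff [symmetric]) (use d1 p2 qpos in auto)
    also have "(sqrt (2*q))^2 = 2*q" using qpos by simp
    finally show ?thesis .
  qed
  show ?thesis using A B C D unfolding p_def q_def d_def by simp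
qed

end
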